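(* Consider any sequences evolved by Algorithm 2 and let $d_0:=\|x^0-x^*\|$. Then for all $k\ge1$, $\sum_{j=1}^k\frac{A_j}{\lambda_j^{(p+1)/(p-1)}}\le\frac{d_0^2}{\theta^{2/(p-1)}(1-\sigma^2)}$. In particular (assuming $d_0>0$), for all $k\ge1$, $\lambda_k\ge C\,d_0^{-2(p-1)/(p+1)}$, where $C:=\lambda_1^{\frac{p-1}{p+1}}\theta^{\frac{2}{p+1}}(1-\sigma^2)^{\frac{p-1}{p+1}}$.
   Context: Setting: $\mathcal H$ is a finite-dimensional real inner product space with inner product $\langle\cdot,\cdot\rangle$ and norm $\|\cdot\|$. $f,g:\mathcal H\to(-\infty,\infty]$ are proper, closed, convex functions, $h:=f+g$ has nonempty domain, and $g$ is $\mu$-strongly convex for some $\mu>0$, i.e. $g(tx+(1-t)y)\le tg(x)+(1-t)g(y)-\frac{\mu}{2}t(1-t)\|x-y\|^2$ for all $x,y\in\mathcal H$, $t\in[0,1]$. $x^*$ denotes the unique minimizer of $h$. For $\varepsilon\ge 0$, $\partial_\varepsilon f(y):=\{u\in\mathcal H: f(w)\ge f(y)+\langle u,w-y\rangle-\varepsilon\ \forall w\in\mathcal H\}$, and $\partial g:=\partial_0 g$. Algorithm 2: Choose $x^0,y^0\in\mathcal H$, $\sigma\in[0,1)$, $p\ge2$ and $\theta>0$, and set $A_0=0$. For $k=0,1,2,\dots$: choose $\lambda_{k+1}>0$, set $a_{k+1}=\frac{(1+2\mu A_k)\lambda_{k+1}+\sqrt{(1+2\mu A_k)^2\lambda_{k+1}^2+4(1+\mu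 A_k)A_k\lambda_{k+1}}}{2}$ and $\tilde x^k=\frac{a_{k+1}-\mu A_k\lambda_{k+1}}{A_k+a_{k+1}}x^k+\frac{A_k+\mu A_k\lambda_{k+1}}{A_k+a_{k+1}}y^k$; compute $(y^{k+1},v^{k+1},\varepsilon_{k+1})\in\mathcal H\times\mathcal H\times[0,\infty)$ such that $v^{k+1}\in\partial_{\varepsilon_{k+1}}f(y^{k+1})+\partial g(y^{k+1})$, $\frac{\|\lambda_{k+1}v^{k+1}+y^{k+1}-\tilde x^k\|^2}{1+\lambda_{k+1}\mu}+2\lambda_{k+1}\varepsilon_{k+1}\le\sigma^2\|y^{k+1}-\tilde x^k\|^2$, and $\lambda_{k+1}\|y^{k+1}-\tilde x^k\|^{p-1}\ge\theta$; then set $A_{k+1}=A_k+a_{k+1}$ and $x^{k+1}=\frac{1+\mu A_k}{1+\mu A_{k+1}}x^k+\frac{\mu a_{k+1}}{1+\mu A_{k+1}}y^{k+1}-\frac{a_{k+1}}{1+\mu A_{k+1}}v^{k+1}$. "Sequences evolved by Algorithm 2" means any sequences satisfying all these relations for every $k\ge 0$. *)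

theory Defs
  imports "HOL-Analysis.Analysis"
begin

definition proper_fun :: "('a \<Rightarrow> ereal) \<Rightarrow> bool" where
  "proper_fun f \<longleftrightarrow> (\<forall>x. f x \<noteq> -\<infinity>) \<and> (\<exists>x. f x \<noteq> \<infinity>)"

definition epigraph_e :: "('a \<Rightarrow> ereal) \<Rightarrow> ('a \<times> real) set" where
  "epigraph_e f = {(x, t). f x \<le> ereal t}"

definition closed_fun :: "('a::topological_space \<Rightarrow> ereal) \<Rightarrow> bool" where
  "closed_fun f \<longleftrightarrow> closed (epigraph_e f)"

definition convex_fun :: "('a::real_vector \<Rightarrow> ereal) \<Rightarrow> bool" where
  "convex_fun f \<longleftrightarrow> convex (epigraph_e f)"

definition strongly_convex_fun :: "real \<Rightarrow> ('a::real_normed_vector \<Rightarrow> ereal) \<Rightarrow> bool" where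
  "strongly_convex_fun \<mu> g \<longleftrightarrow>
     (\<forall>x y t. 0 \<le> t \<and> t \<le> 1 \<longrightarrow>
        g (t *\<^sub>R x + (1 - t) *\<^sub>R y)
          \<le> ereal t * g x + ereal (1 - t) * g y - ereal (\<mu> / 2 * t * (1 - t) * (norm (x - y))\<^sup>2))"

definition eps_subdiff :: "('a::real_inner \<Rightarrow> ereal) \<Rightarrow> real \<Rightarrow> 'a \<Rightarrow> 'a set" where
  "eps_subdiff f \<epsilon> y = {u. \<forall>w. f w \<ge> f y + ereal (inner u (w - y)) - ereal \<epsilon>}"

definition subdiff :: "('a::real_inner \<Rightarrow> ereal) \<Rightarrow> 'a \<Rightarrow> 'a set" where
  "subdiff g y = eps_subdiff g 0 y"

definition set_plus_vec :: "'a::plus set \<Rightarrow> 'a set \<Rightarrow> 'a set" where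
  "set_plus_vec S T = {s + t | s t. s \<in> S \<and> t \<in> T}"

end

theory Submission
  imports Defs
begin


lemma eps_sub_lb:
  assumes hpr: "proper_fun f" and u: "u \<in> eps_subdiff f e y"
  shows "f y \<noteq> \<infinity>" "f y \<noteq> -\<infinity>"
    "\<And>w. f w \<ge> ereal (real_of_ereal (f y) + inner u (w - y) - e)"
proof -
  from hpr obtain z where z: "f z \<noteq> \<infinity>" and ninf: "\<And>x. f x \<noteq> -\<infinity>" unfolding proper_fun_def by auto
  from u have U: "\<And>w. f w \<ge> f y + ereal (inner u (w - y)) - ereal e" unfolding eps_subdiff_def by auto
  show fy: "f y \<noteq> \<infinity>"
  proof
    assume "f y = \<infinity>"
    with U[of z] have "f z \<ge> \<infinity>" by simp
    with z show False by simp
  qed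
  show fy2: "f y \<noteq> -\<infinity>" using ninf by auto
  fix w
  from fy fy2 obtain r where r: "f y = ereal r" by (cases "f y") auto
  show "f w \<ge> ereal (real_of_ereal (f y) + inner u (w - y) - e)"
    using U[of w] r by simp
qed

lemma sc_sub_lb:
  fixes g :: "'a::real_inner \<Rightarrow> ereal"
  assumes hpr: "proper_fun g" and sc: "strongly_convex_fun mu g" and mu: "mu > 0"
    and u: "u \<in> subdiff g y"
  shows "g y \<noteq> \<infinity>" "g y \<noteq> -\<infinity>"
    "\<And>w. g w \<ge> ereal (real_of_ereal (g y) + inner u (w - y) + mu/2 * (norm (w - y))\<^sup>2)"
proof -
  have u': "u \<in> eps_subdiff g 0 y" using u unfolding subdiff_def .
  note L = eps_sub_lb[OF hpr u']
  show gy: "g y \<noteq> \<infinity>" "g y \<noteq> -\<infinity>" using L by auto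
  from gy obtain gv where gv: "g y = ereal gv" by (cases "g y") auto
  fix w
  show "g w \<ge> ereal (real_of_ereal (g y) + inner u (w - y) + mu/2 * (norm (w - y))\<^sup>2)"
  proof (cases "g w = \<infinity>")
    case True then show ?thesis by simp
  next
    case False
    have "g w \<noteq> -\<infinity>" using hpr unfolding proper_fun_def by auto
    with False obtain gw where gw: "g w = ereal gw" by (cases "g w") auto
    define E where "E = gw - gv - inner u (w - y)"
    define d2 where "d2 = (norm (w - y))\<^sup>2"
    have key: "E \<ge> mu/2 * (1 - t) * d2" if t: "0 < t" "t \<le> 1" for t
    proof -
      define z where "z = t *\<^sub>R w + (1 - t) *\<^sub>R y"
      have zy: "z - y = t *\<^sub>R (w - y)" unfolding z_def by (simp add: algebra_simps)
      have "g z \<ge> ereal (gv + inner u (z - y) - 0)" using L(3)[of z] gv by simp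
      hence l: "g z \<ge> ereal (gv + t * inner u (w - y))" using zy by simp
      have "g z \<le> ereal t * g w + ereal (1 - t) * g y - ereal (mu / 2 * t * (1 - t) * (norm (w - y))\<^sup>2)"
        using sc t unfolding strongly_convex_fun_def z_def by auto
      hence "g z \<le> ereal (t * gw + (1 - t) * gv - mu / 2 * t * (1 - t) * d2)"
        unfolding gw gv d2_def by simp
      with l have "gv + t * inner u (w - y) \<le> t * gw + (1 - t) * gv - mu / 2 * t * (1 - t) * d2"
        by (metis ereal_less_eq(3) order_trans)
      hence "t * (mu/2 * (1 - t) * d2) \<le> t * E" unfolding E_def by (simp add: algebra_simps)
      thus ?thesis using t by simp
    qed
    have "E \<ge> mu/2 * d2"
    proof (rule ccontr)
      assume nc: "\<not> E \<ge> mu/2 * d2"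
      have E0: "E \<ge> 0" using key[of 1] by simp
      have d2: "d2 > 0" using nc E0 mu unfolding d2_def
        by (metis mult_zero_right not_le order_le_less zero_le_power2)
      define t where "t = (mu/2 * d2 - E) / (mu * d2)"
      have t0: "t > 0" using nc d2 mu unfolding t_def by (simp add: divide_pos_pos)
      have "t \<le> 1/2" using E0 d2 mu unfolding t_def by (simp add: field_simps)
      hence t1: "t \<le> 1" by simp
      have "mu/2 * (1 - t) * d2 = mu/2 * d2 - (mu/2*d2 - E)/2" using d2 mu unfolding t_def by (simp add: field_simps)
      also have "... > E" using nc by (simp add: field_simps)
      finally show False using key[OF t0 t1] by simp
    qed
    thus ?thesis using gw gv unfolding E_def d2_def by simp
  qed
qed


lemma coeffs:
  fixes A a mu lam :: real
  assumes A: "A \<ge> 0" and a: "a > 0" and mu: "mu > 0" and lam: "lam > 0"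
    and rel: "a\<^sup>2 = lam * ((1 + 2*mu*A)*a + (1+mu*A)*A)"
  defines "C \<equiv> 1+mu*(A+a)" and "K \<equiv> (A+a)/(2*(1+lam*mu))"
    and "al \<equiv> (a-mu*A*lam)/(A+a)" and "be \<equiv> (A+mu*A*lam)/(A+a)"
    and "ka \<equiv> mu*A*lam*(1+mu*A)/(2*a)"
  shows "A = 2*K*be" "C*(a/C)^2/2 = K*lam" "C*((1+mu*A)/C)*(a/C) = 2*K*al"
    "K*mu*al*be = ka" "A*mu/2 = K*mu*be^2 + ka" "(1+mu*A)/2 = C*((1+mu*A)/C)^2/2 + K*mu*al^2 + ka"
    "C * ((1+mu*A)/C) = 1+mu*A" "C * (a/C) = a"
proof -
  have p: "C > 0" "1+lam*mu > 0" "A+a > 0" using A a mu lam unfolding C_def by (auto intro: add_pos_nonneg)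
  define iC where "iC = 1/C"
  define iL where "iL = 1/(1+lam*mu)"
  define iS where "iS = 1/(A+a)"
  define ia where "ia = 1/a"
  have e: "iC*C = 1" "iL*(1+lam*mu) = 1" "iS*(A+a) = 1" "ia*a = 1" using p a unfolding iC_def iL_def iS_def ia_def by auto
  have d: "K = (A+a)*iL/2" "al = (a-mu*A*lam)*iS" "be = (A+mu*A*lam)*iS" "ka = mu*A*lam*(1+mu*A)*ia/2"
     "a/C = a*iC" "(1+mu*A)/C = (1+mu*A)*iC"
    unfolding K_def al_def be_def ka_def iL_def iS_def ia_def iC_def by (auto simp: divide_simps)
  have C: "C = 1+mu*(A+a)" by (simp add: C_def)
  show "A = 2*K*be" unfolding d using e by algebra
  show "C*(a/C)^2/2 = K*lam" unfolding d using e rel C by algebra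
  show "C*((1+mu*A)/C)*(a/C) = 2*K*al" unfolding d using e rel C by algebra
  show "K*mu*al*be = ka" unfolding d using e rel by algebra
  show "A*mu/2 = K*mu*be^2 + ka" unfolding d using e rel by algebra
  show "(1+mu*A)/2 = C*((1+mu*A)/C)^2/2 + K*mu*al^2 + ka" unfolding d using e rel C by algebra
  show "C * ((1+mu*A)/C) = 1+mu*A" "C * (a/C) = a" using p by auto
qed

lemma nsq_diff: "(norm (u - w))\<^sup>2 = (norm u)\<^sup>2 - 2 * inner u w + (norm (w::'a::real_inner))\<^sup>2"
  unfolding power2_norm_eq_inner by (simp add: inner_diff_left inner_diff_right inner_commute)

lemma nsq_comb: "(norm (p *\<^sub>R X + q *\<^sub>R (Y::'a::real_inner)))\<^sup>2 = p^2 * (norm X)\<^sup>2 + 2*p*q * inner X Y + q^2 * (norm Y)\<^sup>2"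
  unfolding power2_norm_eq_inner by (simp add: inner_add_left inner_add_right inner_commute power2_eq_square algebra_simps)

lemma nsq_comb3: "(norm (W - (p *\<^sub>R X - q *\<^sub>R (v::'a::real_inner))))\<^sup>2
   = (norm W)\<^sup>2 - 2*p*inner W X + 2*q*inner W v + p^2 * (norm X)\<^sup>2 - 2*p*q * inner X v + q^2 * (norm v)\<^sup>2"
  unfolding power2_norm_eq_inner by (simp add: inner_diff_left inner_diff_right inner_commute power2_eq_square algebra_simps)

lemma key_identity:
  fixes X Y v W :: "'a::real_inner" and A a mu lam :: real
  assumes A: "A \<ge> 0" and a: "a > 0" and mu: "mu > 0" and lam: "lam > 0"
    and rel: "a\<^sup>2 = lam * ((1 + 2*mu*A)*a + (1+mu*A)*A)"
  shows "(1+mu*A)/2 * (norm (W - X))\<^sup>2 + a*mu/2 * (norm W)\<^sup>2 + a * inner v W + A * inner v Y + A*mu/2 * (norm Y)\<^sup>2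
   = (1+mu*(A+a))/2 * (norm (W - (((1+mu*A)/(1+mu*(A+a))) *\<^sub>R X - (a/(1+mu*(A+a))) *\<^sub>R v)))\<^sup>2
     + (A+a)/(2*(1+lam*mu)) * (mu * (norm (((a-mu*A*lam)/(A+a)) *\<^sub>R X + ((A+mu*A*lam)/(A+a)) *\<^sub>R Y))\<^sup>2
         + 2 * inner v (((a-mu*A*lam)/(A+a)) *\<^sub>R X + ((A+mu*A*lam)/(A+a)) *\<^sub>R Y) - lam * (norm v)\<^sup>2)
     + mu*A*lam*(1+mu*A)/(2*a) * (norm (X - Y))\<^sup>2"
proof -
  note c = coeffs[OF A a mu lam rel]
  define C where "C = 1+mu*(A+a)"
  define K where "K = (A+a)/(2*(1+lam*mu))"
  define al where "al = (a-mu*A*lam)/(A+a)"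
  define be where "be = (A+mu*A*lam)/(A+a)"
  define ka where "ka = mu*A*lam*(1+mu*A)/(2*a)"
  define p where "p = (1+mu*A)/C"
  define q where "q = a/C"
  have c': "A = 2*K*be" "C*q^2/2 = K*lam" "C*p*q = 2*K*al"
    "K*mu*al*be = ka" "A*mu/2 = K*mu*be^2 + ka" "(1+mu*A)/2 = C*p^2/2 + K*mu*al^2 + ka"
    "C*p = 1+mu*A" "C*q = a"
    using c[folded C_def K_def al_def be_def ka_def, folded p_def q_def] by (auto simp: power2_eq_square)
  have iv: "inner v (al *\<^sub>R X + be *\<^sub>R Y) = al * inner X v + be * inner Y v"
    by (simp add: inner_add_right inner_commute)
  have C1: "1 + mu * A + a * mu = C" unfolding C_def by (simp add: algebra_simps)
  show ?thesis
    unfolding C_def[symmetric] K_def[symmetric] al_def[symmetric] be_def[symmetric] ka_def[symmetric]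
      p_def[symmetric] q_def[symmetric] nsq_comb nsq_comb3 nsq_diff[of W X] nsq_diff[of X Y] iv
    using c' C1 by (simp add: inner_commute[of v]) algebra
qed


lemma term_bound:
  fixes lam A th p n :: real
  assumes lam: "lam > 0" and A: "A \<ge> 0" and th: "th > 0" and p: "p \<ge> 2" and n: "n \<ge> 0"
    and lg: "lam * n powr (p - 1) \<ge> th"
  shows "th powr (2/(p-1)) * (A / lam powr ((p+1)/(p-1))) \<le> A / lam * n\<^sup>2"
proof -
  have e: "p - 1 > 0" using p by simp
  have n0: "n > 0"
  proof (rule ccontr)
    assume "\<not> n > 0" hence "n = 0" using n by simp
    thus False using lg th e by simp
  qed
  have "th / lam \<le> n powr (p-1)" using lg lam by (simp add: field_simps)
  hence "(th/lam) powr (2/(p-1)) \<le> (n powr (p-1)) powr (2/(p-1))"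
    using th lam e by (intro powr_mono2) auto
  also have "... = n powr ((p-1)*(2/(p-1)))" by (simp add: powr_powr)
  also have "(p-1)*(2/(p-1)) = 2" using e by (simp add: divide_simps)
  also have "n powr 2 = n\<^sup>2" using n0 by simp
  finally have b: "(th/lam) powr (2/(p-1)) \<le> n\<^sup>2" .
  have q: "(p+1)/(p-1) = 1 + 2/(p-1)" using e by (simp add: field_simps)
  have "lam powr ((p+1)/(p-1)) = lam * lam powr (2/(p-1))" unfolding q using lam by (simp add: powr_add)
  hence "th powr (2/(p-1)) * (A / lam powr ((p+1)/(p-1))) = A / lam * (th/lam) powr (2/(p-1))"
    using lam th by (simp add: powr_divide field_simps)
  also have "... \<le> A / lam * n\<^sup>2" using b A lam by (intro mult_left_mono) auto
  finally show ?thesis .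
qed

lemma final_bound:
  fixes l1 lk th s d p :: real
  assumes l1: "l1 > 0" and lk: "lk > 0" and th: "th > 0" and s: "s > 0" and d: "d > 0" and p: "p \<ge> 2"
    and h: "l1 / lk powr ((p+1)/(p-1)) \<le> d\<^sup>2 / (th powr (2/(p-1)) * s)"
  shows "lk \<ge> l1 powr ((p - 1) / (p + 1)) * th powr (2 / (p + 1)) * s powr ((p - 1) / (p + 1))
              * d powr (- 2 * (p - 1) / (p + 1))"
proof -
  have e: "p - 1 > 0" "p + 1 > 0" using p by auto
  define B where "B = l1 * th powr (2/(p-1)) * s / d\<^sup>2"
  have B: "B > 0" unfolding B_def using l1 th s d by simp
  have "B \<le> lk powr ((p+1)/(p-1))"
    using h l1 lk th s d unfolding B_def by (simp add: field_simps)
  hence "B powr ((p-1)/(p+1)) \<le> (lk powr ((p+1)/(p-1))) powr ((p-1)/(p+1))"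
    using B e by (intro powr_mono2) auto
  also have "... = lk" using e lk by (simp add: powr_powr)
  finally have 1: "B powr ((p-1)/(p+1)) \<le> lk" .
  have "B powr ((p-1)/(p+1)) = l1 powr ((p-1)/(p+1)) * (th powr (2/(p-1))) powr ((p-1)/(p+1))
        * s powr ((p-1)/(p+1)) / (d\<^sup>2) powr ((p-1)/(p+1))"
    unfolding B_def using l1 th s d by (simp add: powr_divide powr_mult)
  also have "(th powr (2/(p-1))) powr ((p-1)/(p+1)) = th powr (2/(p+1))"
  proof -
    have "2/(p-1) * ((p-1)/(p+1)) = 2/(p+1)" using e by (simp add: divide_simps)
    thus ?thesis by (simp add: powr_powr)
  qed
  also have "(d\<^sup>2) powr ((p-1)/(p+1)) = d powr (2*(p-1)/(p+1))"
  proof -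
    have "(d\<^sup>2) = d powr 2" using d by simp
    hence "(d\<^sup>2) powr ((p-1)/(p+1)) = (d powr 2) powr ((p-1)/(p+1))" by simp
    also have "... = d powr (2*(p-1)/(p+1))" by (simp add: powr_powr)
    finally show ?thesis .
  qed
  finally have eq: "B powr ((p-1)/(p+1)) = l1 powr ((p-1)/(p+1)) * th powr (2/(p+1)) * s powr ((p-1)/(p+1)) / d powr (2*(p-1)/(p+1))" .
  have dm: "1 / d powr (2*(p-1)/(p+1)) = d powr (- 2 * (p - 1) / (p + 1))"
  proof -
    have "- 2 * (p - 1) / (p + 1) = -(2*(p-1)/(p+1))" by (simp only: minus_divide_left mult_minus_left)
    thus ?thesis by (simp only: powr_minus_divide)
  qed
  have "B powr ((p-1)/(p+1)) = l1 powr ((p-1)/(p+1)) * th powr (2/(p+1)) * s powr ((p-1)/(p+1)) * (1 / d powr (2*(p-1)/(p+1)))"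
    unfolding eq by simp
  thus ?thesis using 1 unfolding dm by simp
qed

lemma err_scalar:
  fixes lam mu Ap E eps s2 rr vv vr :: real
  assumes lam: "lam > 0" and mu: "mu > 0" and Ap: "Ap > 0"
    and err: "E/(1+lam*mu) + 2*lam*eps \<le> s2*rr" and E: "E = lam\<^sup>2* vv + 2*lam* vr + rr"
  shows "Ap/(2*(1+lam*mu)) * (mu*rr - 2* vr - lam* vv) \<ge> Ap*(1-s2)/(2*lam) * rr + Ap*eps"
proof -
  have pl: "1 + lam*mu > 0" using lam mu by (simp add: add_pos_pos)
  have "Ap/(2*(1+lam*mu)) * (mu*rr - 2* vr - lam* vv) = Ap/(2*lam) * (rr - E/(1+lam*mu))"
  proof -
    define iL where "iL = 1/(1+lam*mu)"
    define il where "il = 1/lam"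
    have e: "iL*(1+lam*mu) = 1" "il*lam = 1" using pl lam unfolding iL_def il_def by auto
    have d: "Ap/(2*(1+lam*mu)) = Ap*iL/2" "Ap/(2*lam) = Ap*il/2" "E/(1+lam*mu) = E*iL"
      unfolding iL_def il_def by auto
    show ?thesis unfolding d(1,2,3) unfolding E using e by algebra
  qed
  also have "... \<ge> Ap/(2*lam) * (rr - (s2*rr - 2*lam*eps))"
    using err lam Ap by (intro mult_left_mono) auto
  also have "Ap/(2*lam) * (rr - (s2*rr - 2*lam*eps)) = Ap*(1-s2)/(2*lam) * rr + Ap*eps"
    using lam by (simp add: field_simps)
  finally show ?thesis by simp
qed

theorem lemma3p1:
  fixes f g :: "'a::euclidean_space \<Rightarrow> ereal"
    and \<mu> \<sigma> p \<theta> :: real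
    and xs :: 'a
    and x y xt v :: "nat \<Rightarrow> 'a"
    and lam a A \<epsilon> :: "nat \<Rightarrow> real"
  assumes f_prop: "proper_fun f" and f_closed: "closed_fun f" and f_conv: "convex_fun f"
    and g_prop: "proper_fun g" and g_closed: "closed_fun g" and g_conv: "convex_fun g"
    and h_dom: "\<exists>z. f z + g z \<noteq> \<infinity>"
    and mu_pos: "\<mu> > 0" and g_sc: "strongly_convex_fun \<mu> g"
    and xs_min: "\<forall>z. f xs + g xs \<le> f z + g z"
    and sigma: "0 \<le> \<sigma>" "\<sigma> < 1" and p: "p \<ge> 2" and theta: "\<theta> > 0"
    and A0: "A 0 = 0"
    and lam_pos: "\<And>k. lam (Suc k) > 0"
    and a_def: "\<And>k. a (Suc k) =
        ((1 + 2 * \<mu> * A k) * lam (Suc k)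
         + sqrt (((1 + 2 * \<mu> * A k) * lam (Suc k))\<^sup>2 + 4 * (1 + \<mu> * A k) * A k * lam (Suc k))) / 2"
    and xt_def: "\<And>k. xt k =
        ((a (Suc k) - \<mu> * A k * lam (Suc k)) / (A k + a (Suc k))) *\<^sub>R x k
        + ((A k + \<mu> * A k * lam (Suc k)) / (A k + a (Suc k))) *\<^sub>R y k"
    and eps_nonneg: "\<And>k. \<epsilon> (Suc k) \<ge> 0"
    and v_incl: "\<And>k. v (Suc k) \<in> set_plus_vec (eps_subdiff f (\<epsilon> (Suc k)) (y (Suc k))) (subdiff g (y (Suc k)))"
    and err: "\<And>k. (norm (lam (Suc k) *\<^sub>R v (Suc k) + y (Suc k) - xt k))\<^sup>2 / (1 + lam (Suc k) * \<mu>)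
                 + 2 * lam (Suc k) * \<epsilon> (Suc k) \<le> \<sigma>\<^sup>2 * (norm (y (Suc k) - xt k))\<^sup>2"
    and large: "\<And>k. lam (Suc k) * norm (y (Suc k) - xt k) powr (p - 1) \<ge> \<theta>"
    and A_step: "\<And>k. A (Suc k) = A k + a (Suc k)"
    and x_step: "\<And>k. x (Suc k) =
        ((1 + \<mu> * A k) / (1 + \<mu> * A (Suc k))) *\<^sub>R x k
        + ((\<mu> * a (Suc k)) / (1 + \<mu> * A (Suc k))) *\<^sub>R y (Suc k)
        - (a (Suc k) / (1 + \<mu> * A (Suc k))) *\<^sub>R v (Suc k)"
  shows "(\<forall>k\<ge>1. (\<Sum>j=1..k. A j / lam j powr ((p + 1) / (p - 1)))
            \<le> (norm (x 0 - xs))\<^sup>2 / (\<theta> powr (2 / (p - 1)) * (1 - \<sigma>\<^sup>2)))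
       \<and> (norm (x 0 - xs) > 0 \<longrightarrow>
           (\<forall>k\<ge>1. lam k \<ge>
              lam 1 powr ((p - 1) / (p + 1)) * \<theta> powr (2 / (p + 1)) * (1 - \<sigma>\<^sup>2) powr ((p - 1) / (p + 1))
              * norm (x 0 - xs) powr (- 2 * (p - 1) / (p + 1))))"
  proof -
  define d0 where "d0 = norm (x 0 - xs)"
  have sig: "1 - \<sigma>\<^sup>2 > 0"
  proof -
    have "\<sigma>\<^sup>2 < 1" using sigma by (simp add: power_less_one_iff abs_square_less_1)
    thus ?thesis by simp
  qed
  have ninf_f: "\<And>z. f z \<noteq> -\<infinity>" using f_prop unfolding proper_fun_def by auto
  have ninf_g: "\<And>z. g z \<noteq> -\<infinity>" using g_prop unfolding proper_fun_def by auto
  have aA: "a (Suc k) > 0 \<and> (a (Suc k))\<^sup>2 = lam (Suc k) * ((1 + 2*\<mu>*A k)*a (Suc k) + (1+\<mu>*A k)*A k)"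
    if Ak: "A k \<ge> 0" for k
  proof -
    define b where "b = (1 + 2 * \<mu> * A k) * lam (Suc k)"
    define D where "D = b\<^sup>2 + 4 * (1 + \<mu> * A k) * A k * lam (Suc k)"
    have b: "b > 0" unfolding b_def using Ak mu_pos lam_pos[of k] by (simp add: add_pos_nonneg)
    have D: "D \<ge> 0" unfolding D_def using Ak mu_pos lam_pos[of k] by (simp add: add_nonneg_nonneg)
    have ad: "a (Suc k) = (b + sqrt D) / 2" unfolding a_def b_def D_def ..
    have sD: "sqrt D \<ge> 0" using D by simp
    have "b + sqrt D > 0" using b sD by linarith
    hence pos: "a (Suc k) > 0" unfolding ad by simp
    have "2 * a (Suc k) = b + sqrt D" unfolding ad by simp
    hence "2 * a (Suc k) - b = sqrt D" by simp
    hence "(2 * a (Suc k) - b)\<^sup>2 = D" using D by simp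
    hence "(a (Suc k))\<^sup>2 = a (Suc k) * b + (1 + \<mu> * A k) * A k * lam (Suc k)"
      unfolding D_def by (simp add: power2_eq_square algebra_simps)
    thus ?thesis using pos unfolding b_def by (simp add: algebra_simps)
  qed
  have A_nn: "A k \<ge> 0" for k
  proof (induction k)
    case 0 then show ?case using A0 by simp
  next
    case (Suc k) then show ?case using aA[of k] A_step[of k] by simp
  qed
  have a_pos: "a (Suc k) > 0" for k using aA[OF A_nn] by simp
  have rel: "(a (Suc k))\<^sup>2 = lam (Suc k) * ((1 + 2*\<mu>*A k)*a (Suc k) + (1+\<mu>*A k)*A k)" for k
    using aA[OF A_nn] by simp
  define Hr where "Hr z = real_of_ereal (f z) + real_of_ereal (g z)" for z
  have xs_fin: "f xs \<noteq> \<infinity> \<and> g xs \<noteq> \<infinity>"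
  proof -
    obtain z where z: "f z + g z \<noteq> \<infinity>" using h_dom by auto
    have "f xs + g xs \<noteq> \<infinity>" using xs_min[rule_format, of z] z by auto
    thus ?thesis using ninf_f[of xs] ninf_g[of xs] by auto
  qed
  have LB: "f (y (Suc k)) \<noteq> \<infinity> \<and> g (y (Suc k)) \<noteq> \<infinity> \<and>
     (\<forall>w. f w \<noteq> \<infinity> \<longrightarrow> g w \<noteq> \<infinity> \<longrightarrow>
       Hr w \<ge> Hr (y (Suc k)) + inner (v (Suc k)) (w - y (Suc k)) - \<epsilon> (Suc k) + \<mu>/2 * (norm (w - y (Suc k)))\<^sup>2)" for k
  proof -
    obtain u1 u2 where vu: "v (Suc k) = u1 + u2" and u1: "u1 \<in> eps_subdiff f (\<epsilon> (Suc k)) (y (Suc k))"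
      and u2: "u2 \<in> subdiff g (y (Suc k))"
      using v_incl[of k] unfolding set_plus_vec_def by auto
    note L1 = eps_sub_lb[OF f_prop u1]
    note L2 = sc_sub_lb[OF g_prop g_sc mu_pos u2]
    have "Hr w \<ge> Hr (y (Suc k)) + inner (v (Suc k)) (w - y (Suc k)) - \<epsilon> (Suc k) + \<mu>/2 * (norm (w - y (Suc k)))\<^sup>2"
      if fw: "f w \<noteq> \<infinity>" "g w \<noteq> \<infinity>" for w
    proof -
      obtain fr where fr: "f w = ereal fr" using fw ninf_f[of w] by (cases "f w") auto
      obtain gr where gr: "g w = ereal gr" using fw ninf_g[of w] by (cases "g w") auto
      have 1: "fr \<ge> real_of_ereal (f (y (Suc k))) + inner u1 (w - y (Suc k)) - \<epsilon> (Suc k)"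
        using L1(3)[of w] fr by simp
      have 2: "gr \<ge> real_of_ereal (g (y (Suc k))) + inner u2 (w - y (Suc k)) + \<mu>/2 * (norm (w - y (Suc k)))\<^sup>2"
        using L2(3)[of w] gr by simp
      show ?thesis using 1 2 fr gr unfolding Hr_def vu by (simp add: inner_add_left)
    qed
    thus ?thesis using L1 L2 by auto
  qed
  define S where "S k = (1 - \<sigma>\<^sup>2)/2 * (\<Sum>j=1..k. A j / lam j * (norm (y j - xt (j - 1)))\<^sup>2)" for k
  have inv: "A k * Hr xs + d0\<^sup>2/2 \<ge> A k * Hr (y k) + S k + (1 + \<mu> * A k)/2 * (norm (xs - x k))\<^sup>2" for k
  proof (induction k)
    case 0
    show ?case using A0 unfolding S_def d0_def by (simp add: norm_minus_commute)
  next
    case (Suc k)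
    define Ak where "Ak = A k"
    define ak where "ak = a (Suc k)"
    define lk where "lk = lam (Suc k)"
    define vk where "vk = v (Suc k)"
    define ek where "ek = \<epsilon> (Suc k)"
    define y' where "y' = y (Suc k)"
    define X where "X = x k - y'"
    define Y where "Y = y k - y'"
    define W where "W = xs - y'"
    define r where "r = y' - xt k"
    have Ak: "Ak \<ge> 0" using A_nn unfolding Ak_def by simp
    have ak: "ak > 0" using a_pos unfolding ak_def by simp
    have lk: "lk > 0" using lam_pos unfolding lk_def by simp
    have relk: "ak\<^sup>2 = lk * ((1 + 2*\<mu>*Ak)*ak + (1+\<mu>*Ak)*Ak)" using rel unfolding ak_def lk_def Ak_def by simp
    have ASk: "A (Suc k) = Ak + ak" using A_step unfolding Ak_def ak_def by simp
    have LBx: "Hr xs \<ge> Hr y' + inner vk W - ek + \<mu>/2 * (norm W)\<^sup>2"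
      using LB[of k] xs_fin unfolding y'_def vk_def W_def ek_def by blast
    have LBy: "Ak * Hr (y k) \<ge> Ak * (Hr y' + inner vk Y - ek + \<mu>/2 * (norm Y)\<^sup>2)"
    proof (cases k)
      case 0 then show ?thesis using A0 unfolding Ak_def by simp
    next
      case (Suc m)
      have "Hr (y k) \<ge> Hr y' + inner vk Y - ek + \<mu>/2 * (norm Y)\<^sup>2"
        using LB[of k] LB[of m] unfolding y'_def vk_def Y_def ek_def Suc by blast
      thus ?thesis using Ak by (intro mult_left_mono) auto
    qed
    have IH: "Ak * Hr xs + d0\<^sup>2/2 \<ge> Ak * Hr (y k) + S k + (1 + \<mu> * Ak)/2 * (norm (W - X))\<^sup>2"
      using Suc.IH unfolding Ak_def W_def X_def by simp
    note id = key_identity[OF Ak ak mu_pos lk relk, of W X vk Y]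
    define C where "C = 1 + \<mu> * (Ak + ak)"
    have C: "C > 0" using Ak ak mu_pos unfolding C_def by (simp add: add_pos_nonneg)
    have xW: "W - (((1+\<mu>*Ak)/C) *\<^sub>R X - (ak/C) *\<^sub>R vk) = xs - x (Suc k)"
    proof -
      have s1: "\<mu>*ak/C = 1 - (1+\<mu>*Ak)/C" using C unfolding C_def by (simp add: field_simps)
      have xs: "x (Suc k) = ((1+\<mu>*Ak)/C) *\<^sub>R x k + (\<mu>*ak/C) *\<^sub>R y' - (ak/C) *\<^sub>R vk"
        using x_step[of k] A_step[of k] unfolding C_def Ak_def ak_def y'_def vk_def by simp
      show ?thesis unfolding xs s1 W_def X_def by (simp add: algebra_simps)
    qed
    define al where "al = (ak-\<mu>*Ak*lk)/(Ak+ak)"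
    define be where "be = (Ak+\<mu>*Ak*lk)/(Ak+ak)"
    have albe: "al + be = 1"
    proof -
      have "al + be = ((ak-\<mu>*Ak*lk) + (Ak+\<mu>*Ak*lk))/(Ak+ak)" unfolding al_def be_def by (rule add_divide_distrib[symmetric])
      also have "(ak-\<mu>*Ak*lk) + (Ak+\<mu>*Ak*lk) = Ak + ak" by simp
      finally show ?thesis using Ak ak by simp
    qed
    have Zr: "al *\<^sub>R X + be *\<^sub>R Y = - r"
    proof -
      have xtk: "xt k = al *\<^sub>R x k + be *\<^sub>R y k" using xt_def[of k] unfolding al_def be_def Ak_def ak_def lk_def .
      have "al *\<^sub>R X + be *\<^sub>R Y = al *\<^sub>R x k + be *\<^sub>R y k - (al + be) *\<^sub>R y'"
        unfolding X_def Y_def by (simp add: algebra_simps)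
      thus ?thesis unfolding albe r_def xtk by simp
    qed
    define K where "K = (Ak+ak)/(2*(1+lk*\<mu>))"
    have errk: "(norm (lk *\<^sub>R vk + r))\<^sup>2 / (1 + lk * \<mu>) + 2 * lk * ek \<le> \<sigma>\<^sup>2 * (norm r)\<^sup>2"
    proof -
      have "lk *\<^sub>R vk + y' - xt k = lk *\<^sub>R vk + r" unfolding r_def by (simp add: algebra_simps)
      thus ?thesis using err[of k] unfolding lk_def vk_def y'_def ek_def r_def by (simp add: add_diff_eq)
    qed
    have Eexp: "(norm (lk *\<^sub>R vk + r))\<^sup>2 = lk\<^sup>2 * (norm vk)\<^sup>2 + 2 * lk * inner vk r + (norm r)\<^sup>2"
      unfolding power2_norm_eq_inner by (simp add: inner_add_left inner_add_right inner_commute power2_eq_square)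
    have errb: "K * (\<mu> * (norm r)\<^sup>2 - 2 * inner vk r - lk * (norm vk)\<^sup>2) \<ge> (Ak+ak)*(1-\<sigma>\<^sup>2)/(2*lk) * (norm r)\<^sup>2 + (Ak+ak)*ek"
      unfolding K_def using err_scalar[OF lk mu_pos _ errk Eexp] Ak ak by simp
    have Q: "\<mu> * (norm (al *\<^sub>R X + be *\<^sub>R Y))\<^sup>2 + 2 * inner vk (al *\<^sub>R X + be *\<^sub>R Y) - lk * (norm vk)\<^sup>2
        = \<mu> * (norm r)\<^sup>2 - 2 * inner vk r - lk * (norm vk)\<^sup>2"
      unfolding Zr by simp
    have id2: "(1+\<mu>*Ak)/2 * (norm (W - X))\<^sup>2 + ak*\<mu>/2 * (norm W)\<^sup>2 + ak * inner vk W + Ak * inner vk Y + Ak*\<mu>/2 * (norm Y)\<^sup>2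
      = C/2 * (norm (xs - x (Suc k)))\<^sup>2 + K * (\<mu> * (norm r)\<^sup>2 - 2 * inner vk r - lk * (norm vk)\<^sup>2)
        + \<mu>*Ak*lk*(1+\<mu>*Ak)/(2*ak) * (norm (X - Y))\<^sup>2"
      using id unfolding C_def[symmetric] xW al_def[symmetric] be_def[symmetric] K_def[symmetric] Q .
    have kap: "\<mu>*Ak*lk*(1+\<mu>*Ak)/(2*ak) * (norm (X - Y))\<^sup>2 \<ge> 0"
      using Ak ak lk mu_pos by (simp add: add_nonneg_nonneg)
    have LBx': "ak * Hr xs \<ge> ak * Hr y' + ak * inner vk W - ak * ek + ak*\<mu>/2 * (norm W)\<^sup>2"
      using mult_left_mono[OF LBx, of ak] ak by (simp add: algebra_simps)
    have LBy': "Ak * Hr (y k) \<ge> Ak * Hr y' + Ak * inner vk Y - Ak * ek + Ak*\<mu>/2 * (norm Y)\<^sup>2"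
      using LBy by (simp add: algebra_simps)
    have SS: "S (Suc k) = S k + (1 - \<sigma>\<^sup>2)/2 * ((Ak + ak) / lk * (norm r)\<^sup>2)"
      unfolding S_def r_def y'_def lk_def using ASk by (simp add: algebra_simps)
    have t2: "(1 - \<sigma>\<^sup>2)/2 * ((Ak + ak) / lk * (norm r)\<^sup>2) = (Ak+ak)*(1-\<sigma>\<^sup>2)/(2*lk) * (norm r)\<^sup>2"
      by (simp add: field_simps)
    have goal: "(Ak + ak) * Hr xs + d0\<^sup>2/2 \<ge> (Ak + ak) * Hr y' + S (Suc k) + C/2 * (norm (xs - x (Suc k)))\<^sup>2"
      using IH LBx' LBy' id2 errb kap unfolding SS t2 by (simp add: algebra_simps)
    show ?case using goal unfolding ASk C_def y'_def by simp
  qed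
  have lamj: "lam j > 0" if "j \<ge> 1" for j
    using lam_pos[of "j - 1"] that by simp
  have part1: "(\<Sum>j=1..k. A j / lam j powr ((p + 1) / (p - 1)))
            \<le> d0\<^sup>2 / (\<theta> powr (2 / (p - 1)) * (1 - \<sigma>\<^sup>2))" if k: "k \<ge> 1" for k
  proof -
    obtain m where m: "k = Suc m" using k by (cases k) auto
    have fy: "f (y k) \<noteq> \<infinity> \<and> g (y k) \<noteq> \<infinity>" using LB[of m] m by simp
    have "Hr xs \<le> Hr (y k)"
    proof -
      obtain a1 where a1: "f xs = ereal a1" using xs_fin ninf_f[of xs] by (cases "f xs") auto
      obtain a2 where a2: "g xs = ereal a2" using xs_fin ninf_g[of xs] by (cases "g xs") auto
      obtain b1 where b1: "f (y k) = ereal b1" using fy ninf_f[of "y k"] by (cases "f (y k)") auto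
      obtain b2 where b2: "g (y k) = ereal b2" using fy ninf_g[of "y k"] by (cases "g (y k)") auto
      show ?thesis using xs_min[rule_format, of "y k"] a1 a2 b1 b2 unfolding Hr_def by simp
    qed
    hence "A k * Hr xs \<le> A k * Hr (y k)" using A_nn by (intro mult_left_mono) auto
    moreover have "(1 + \<mu> * A k)/2 * (norm (xs - x k))\<^sup>2 \<ge> 0" using A_nn[of k] mu_pos by simp
    ultimately have "S k \<le> d0\<^sup>2/2" using inv[of k] by linarith
    hence s1: "(\<Sum>j=1..k. A j / lam j * (norm (y j - xt (j - 1)))\<^sup>2) \<le> d0\<^sup>2 / (1 - \<sigma>\<^sup>2)"
      unfolding S_def using sig by (simp add: field_simps)
    have "(\<Sum>j=1..k. \<theta> powr (2/(p-1)) * (A j / lam j powr ((p+1)/(p-1))))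
          \<le> (\<Sum>j=1..k. A j / lam j * (norm (y j - xt (j - 1)))\<^sup>2)"
    proof (rule sum_mono)
      fix j assume j: "j \<in> {1..k}"
      then obtain i where i: "j = Suc i" by (cases j) auto
      show "\<theta> powr (2/(p-1)) * (A j / lam j powr ((p+1)/(p-1))) \<le> A j / lam j * (norm (y j - xt (j - 1)))\<^sup>2"
        unfolding i using term_bound[OF lam_pos[of i] A_nn theta p norm_ge_zero large[of i]] by simp
    qed
    hence "\<theta> powr (2/(p-1)) * (\<Sum>j=1..k. A j / lam j powr ((p+1)/(p-1))) \<le> d0\<^sup>2 / (1 - \<sigma>\<^sup>2)"
      using s1 by (simp add: sum_distrib_left)
    moreover have "\<theta> powr (2/(p-1)) > 0" using theta by simp
    ultimately show ?thesis using sig by (simp add: field_simps)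
  qed
  have A1: "A 1 = lam 1"
  proof -
    have "a 1 = lam 1"
      using a_def[of 0] A0 lam_pos[of 0] by simp
    thus ?thesis using A_step[of 0] A0 by simp
  qed
  have Amono: "A m \<le> A n" if "m \<le> n" for m n
    using that
  proof (induction n)
    case 0 then show ?case by simp
  next
    case (Suc n) then show ?case using A_step[of n] a_pos[of n] by (cases "m = Suc n") auto
  qed
  have part2: "lam k \<ge> lam 1 powr ((p - 1) / (p + 1)) * \<theta> powr (2 / (p + 1)) * (1 - \<sigma>\<^sup>2) powr ((p - 1) / (p + 1))
              * d0 powr (- 2 * (p - 1) / (p + 1))" if k: "k \<ge> 1" and d: "d0 > 0" for k
  proof -
    have q: "\<forall>j\<in>{1..k}. 0 \<le> A j / lam j powr ((p + 1) / (p - 1))" using A_nn by simp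
    have "A k / lam k powr ((p + 1) / (p - 1)) \<le> (\<Sum>j=1..k. A j / lam j powr ((p + 1) / (p - 1)))"
      using member_le_sum[of k "{1..k}" "\<lambda>j. A j / lam j powr ((p + 1) / (p - 1))"] q k by simp
    also have "... \<le> d0\<^sup>2 / (\<theta> powr (2 / (p - 1)) * (1 - \<sigma>\<^sup>2))" using part1[OF k] .
    finally have 1: "A k / lam k powr ((p + 1) / (p - 1)) \<le> d0\<^sup>2 / (\<theta> powr (2 / (p - 1)) * (1 - \<sigma>\<^sup>2))" .
    have "lam 1 \<le> A k" using Amono[OF k] A1 by simp
    hence "lam 1 / lam k powr ((p + 1) / (p - 1)) \<le> A k / lam k powr ((p + 1) / (p - 1))"
      by (intro divide_right_mono) auto
    with 1 have "lam 1 / lam k powr ((p + 1) / (p - 1)) \<le> d0\<^sup>2 / (\<theta> powr (2 / (p - 1)) * (1 - \<sigma>\<^sup>2))" by linarith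
    thus ?thesis using final_bound[OF lamj[of 1] lamj[OF k] theta sig d p] by simp
  qed
  show ?thesis using part1 part2 unfolding d0_def by blast
qed

end
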